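(* Let $\pi:L_{\mathcal F}\to L_{\mathcal G}$ satisfy (REG). For every $Y\in L^0(\Omega,\mathcal G,\mathbb P)$ and $\xi'\in L^*_{\mathcal F}\cap(L^1_{\mathcal F})_+$, with $\mu$ the measure $d\mu/d\mathbb P=\xi'$, the set \[\mathcal A(Y,\xi'):=\{\pi(\xi)\mid \xi\in L_{\mathcal F},\ E_{\mathbb P}[\xi'\xi\mid\mathcal G]\ge_\mu Y\}\] is downward directed; consequently there exists a sequence $(\eta_m)_{m\ge1}\subseteq L_{\mathcal F}$ with $E_{\mathbb P}[\xi'\eta_m\mid\mathcal G]\ge_\mu Y$ for all $m$ and $\pi(\eta_m)\downarrow R(Y,\xi')$ as $m\uparrow\infty$, where $R(Y,\xi'):=\inf\mathcal A(Y,\xi')$.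
   Context: Let $(\Omega,\mathcal F,\mathbb P)$ be a probability space and $\mathcal G\subseteq\mathcal F$ a sub-$\sigma$-algebra. (In)equalities hold $\mathbb P$-a.s. unless a measure is indicated ($\ge_\mu$ means $\mu$-a.e.); $\inf$ is the $\mathbb P$-essential infimum. $L_{\mathcal F}\subseteq L^0(\Omega,\mathcal F,\mathbb P)$, $L_{\mathcal G}\subseteq L^0(\Omega,\mathcal G,\mathbb P)$ are vector lattices closed under multiplication by indicators of $\mathcal F$- (resp. $\mathcal G$-) measurable sets; the order continuous dual $L^*_{\mathcal F}$ of $(L_{\mathcal F},\ge)$ is a lattice contained in $L^1_{\mathcal F}=L^1(\Omega,\mathcal F,\mathbb P)$ (functionals $X\mapsto E_{\mathbb P}[ZX]$), closed under multiplication by indicators of sets in $\mathcal F$. (REG): $\pi(X\mathbf 1_A+Y\mathbf 1_{A^c})=\pi(X)\mathbf 1_A+\pi(Y)\mathbf 1_{A^c}$ for all $X,Y\in L_{\mathcal F}$, $A\in\mathcal G$. A set of random variables is downward directed if for any two of its elements there is an element of the set below both. *)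

theory Defs
  imports "HOL-Probability.Probability"
begin

text \<open>Random variables are represented by real-valued functions; elements of L0 are
  a.e.-equivalence classes, so all sets of random variables below are required to be
  saturated under a.e. equality, and all (in)equalities are understood a.e.\<close>

definition ae_saturated :: "'a measure \<Rightarrow> 'a measure \<Rightarrow> ('a \<Rightarrow> real) set \<Rightarrow> bool" where
  "ae_saturated M N L \<longleftrightarrow>
     (\<forall>X\<in>L. \<forall>X'. X' \<in> borel_measurable N \<and> (AE x in M. X x = X' x) \<longrightarrow> X' \<in> L)"

definition L0_vector_lattice :: "'a measure \<Rightarrow> 'a measure \<Rightarrow> ('a \<Rightarrow> real) set \<Rightarrow> bool" where
  "L0_vector_lattice M N L \<longleftrightarrow>
     L \<subseteq> borel_measurable N \<and> ae_saturated M N L \<and>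
     (\<lambda>x. 0) \<in> L \<and>
     (\<forall>X\<in>L. \<forall>Y\<in>L. (\<lambda>x. X x + Y x) \<in> L) \<and>
     (\<forall>X\<in>L. \<forall>c::real. (\<lambda>x. c * X x) \<in> L) \<and>
     (\<forall>X\<in>L. \<forall>Y\<in>L. (\<lambda>x. max (X x) (Y x)) \<in> L) \<and>
     (\<forall>X\<in>L. \<forall>A\<in>sets N. (\<lambda>x. indicator A x * X x) \<in> L)"

definition REG :: "'a measure \<Rightarrow> 'a measure \<Rightarrow> ('a \<Rightarrow> real) set \<Rightarrow>
    (('a \<Rightarrow> real) \<Rightarrow> ('a \<Rightarrow> real)) \<Rightarrow> bool" where
  "REG M G LF \<pi> \<longleftrightarrow>
     (\<forall>X\<in>LF. \<forall>Y\<in>LF. \<forall>A\<in>sets G.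
        AE x in M. \<pi> (\<lambda>\<omega>. X \<omega> * indicator A \<omega> + Y \<omega> * indicator (space M - A) \<omega>) x
                   = \<pi> X x * indicator A x + \<pi> Y x * indicator (space M - A) x)"

text \<open>Order continuous dual of (L, a.e. order), represented inside L1:
  Z is integrable, Z*X is integrable for X in L, and X \<mapsto> E[Z X] is order continuous, i.e.
  for every downward directed D \<subseteq> L of nonnegative elements with infimum 0 in L,
  E[Z X] \<rightarrow> 0 along the net D.\<close>
definition order_cont_dual :: "'a measure \<Rightarrow> ('a \<Rightarrow> real) set \<Rightarrow> ('a \<Rightarrow> real) set" where
  "order_cont_dual M L = {Z. integrable M Z \<and> (\<forall>X\<in>L. integrable M (\<lambda>x. Z x * X x)) \<and>
     (\<forall>D. D \<subseteq> L \<and> D \<noteq> {} \<and>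
          (\<forall>X\<in>D. AE x in M. 0 \<le> X x) \<and>
          (\<forall>X1\<in>D. \<forall>X2\<in>D. \<exists>X3\<in>D. AE x in M. X3 x \<le> X1 x \<and> X3 x \<le> X2 x) \<and>
          (\<forall>W\<in>L. (\<forall>X\<in>D. AE x in M. W x \<le> X x) \<longrightarrow> (AE x in M. W x \<le> 0))
        \<longrightarrow> (\<forall>e>0. \<exists>X0\<in>D. \<forall>X\<in>D. (AE x in M. X x \<le> X0 x) \<longrightarrow>
                  \<bar>integral\<^sup>L M (\<lambda>x. Z x * X x)\<bar> < e))}"

definition down_directed :: "'a measure \<Rightarrow> ('a \<Rightarrow> real) set \<Rightarrow> bool" where
  "down_directed M S \<longleftrightarrow>
     (\<forall>X1\<in>S. \<forall>X2\<in>S. \<exists>X3\<in>S. AE x in M. X3 x \<le> X1 x \<and> X3 x \<le> X2 x)"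

definition is_ess_inf :: "'a measure \<Rightarrow> 'a measure \<Rightarrow> ('a \<Rightarrow> real) set \<Rightarrow> ('a \<Rightarrow> ereal) \<Rightarrow> bool" where
  "is_ess_inf M N S R \<longleftrightarrow>
     R \<in> borel_measurable N \<and>
     (\<forall>X\<in>S. AE x in M. R x \<le> ereal (X x)) \<and>
     (\<forall>R'\<in>borel_measurable N. (\<forall>X\<in>S. AE x in M. R' x \<le> ereal (X x)) \<longrightarrow>
        (AE x in M. R' x \<le> R x))"

definition acc_set :: "'a measure \<Rightarrow> 'a measure \<Rightarrow> ('a \<Rightarrow> real) set \<Rightarrow>
    (('a \<Rightarrow> real) \<Rightarrow> ('a \<Rightarrow> real)) \<Rightarrow> ('a \<Rightarrow> real) \<Rightarrow> ('a \<Rightarrow> real) \<Rightarrow> ('a \<Rightarrow> real) set" where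
  "acc_set M G LF \<pi> Y \<xi>' =
     {\<pi> \<xi> | \<xi>. \<xi> \<in> LF \<and>
        (AE x in density M (\<lambda>x. ennreal (\<xi>' x)).
           real_cond_exp M G (\<lambda>\<omega>. \<xi>' \<omega> * \<xi> \<omega>) x \<ge> Y x)}"

end

theory Submission imports Defs begin

lemma ess_inf_seq:
  assumes P: "prob_space M" and Smeas: "S \<subseteq> borel_measurable M" and ne: "S \<noteq> {}"
    and dd: "down_directed M S"
  obtains f where "\<forall>m. f m \<in> S" "AE x in M. \<forall>m. f (Suc m) x \<le> f m x"
    "\<forall>X\<in>S. AE x in M. (INF m. ereal (f m x)) \<le> ereal (X x)"
proof -
  interpret prob_space M by (rule P)
  have abnd: "\<bar>arctan y\<bar> \<le> pi/2" for y using arctan_bounded[of y] by linarith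
  define E where "E X = integral\<^sup>L M (\<lambda>x. arctan (X x))" for X :: "'a \<Rightarrow> real"
  have intg: "integrable M (\<lambda>x. arctan (X x))" if "X \<in> borel_measurable M" for X
    by (rule integrable_const_bound[where B="pi/2"]) (use that abnd in auto)
  have Elow: "- (pi/2) \<le> E X" if "X \<in> borel_measurable M" for X
    unfolding E_def by (rule integral_ge_const[OF intg[OF that]])
       (use arctan_bounded in \<open>auto intro: less_imp_le\<close>)
  define c where "c = Inf (E ` S)"
  have bdd: "bdd_below (E ` S)" using Elow Smeas by (auto intro!: bdd_belowI[where m="-(pi/2)"])
  have cle: "c \<le> E X" if "X \<in> S" for X unfolding c_def using bdd that by (auto intro: cInf_lower)
  have "\<exists>Z\<in>S. E Z < c + inverse (real (Suc n))" for n
  proof -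
    have "Inf (E ` S) < c + inverse (real (Suc n))" unfolding c_def by simp
    from cInf_lessD[OF _ this] ne show ?thesis by auto
  qed
  then obtain Z where Z: "\<And>n. Z n \<in> S \<and> E (Z n) < c + inverse (real (Suc n))" by metis
  have ddS: "\<forall>X1\<in>S. \<forall>X2\<in>S. \<exists>X3\<in>S. AE x in M. X3 x \<le> X1 x \<and> X3 x \<le> X2 x"
    using dd unfolding down_directed_def by blast
  define step where "step n Q = (SOME W. W \<in> S \<and> (AE x in M. W x \<le> Q x \<and> W x \<le> Z (Suc n) x))" for n Q
  have stepP: "step n Q \<in> S \<and> (AE x in M. step n Q x \<le> Q x \<and> step n Q x \<le> Z (Suc n) x)"
    if "Q \<in> S" for n Q
  proof -
    have "\<exists>W. W \<in> S \<and> (AE x in M. W x \<le> Q x \<and> W x \<le> Z (Suc n) x)"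
      using ddS that Z by blast
    from someI_ex[OF this] show ?thesis unfolding step_def .
  qed
  define f where "f = rec_nat (Z 0) step"
  have f0: "f 0 = Z 0" and fS: "f (Suc n) = step n (f n)" for n by (simp_all add: f_def)
  have fin: "f n \<in> S" for n by (induction n) (use Z stepP f0 fS in auto)
  have fstep: "AE x in M. f (Suc n) x \<le> f n x \<and> f (Suc n) x \<le> Z (Suc n) x" for n
    using stepP[OF fin[of n]] fS by simp
  have fmono: "AE x in M. \<forall>m. f (Suc m) x \<le> f m x"
    unfolding AE_all_countable using fstep by (auto elim: AE_mp)
  have fmeas: "f n \<in> borel_measurable M" for n using fin Smeas by auto
  have Ef: "E (f n) < c + inverse (real (Suc n))" for n
  proof (cases n)
    case 0 then show ?thesis using Z[of 0] f0 by simp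
  next
    case (Suc k)
    have "E (f n) \<le> E (Z n)" unfolding E_def
      by (rule integral_mono_AE) (use intg fmeas Z Smeas fstep[of k] Suc in \<open>auto simp: arctan_le_iff\<close>)
    then show ?thesis using Z[of n] by simp
  qed
  have main: "AE x in M. (INF m. ereal (f m x)) \<le> ereal (X x)" if XS: "X \<in> S" for X
  proof -
    have Xm: "X \<in> borel_measurable M" using XS Smeas by auto
    define h where "h x = (INF m. arctan (f m x))" for x
    have bddx: "bdd_below (range (\<lambda>m. arctan (f m x)))" for x
      using arctan_bounded by (auto intro!: bdd_belowI[where m="-(pi/2)"] less_imp_le)
    have hle: "h x \<le> arctan (f n x)" for x n unfolding h_def by (rule cINF_lower[OF bddx]) simp
    have hm: "h \<in> borel_measurable M" unfolding h_def
      by (rule borel_measurable_cINF_real) (use fmeas in auto)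
    obtain W where W: "\<And>n. W n \<in> S \<and> (AE x in M. W n x \<le> X x \<and> W n x \<le> f n x)"
    proof -
      have "\<forall>n. \<exists>V. V \<in> S \<and> (AE x in M. V x \<le> X x \<and> V x \<le> f n x)"
        using ddS XS fin by blast
      then show ?thesis using that by metis
    qed
    define \<phi> where "\<phi> x = max 0 (h x - arctan (X x))" for x
    have \<phi>m: "\<phi> \<in> borel_measurable M" unfolding \<phi>_def using hm Xm by auto
    have hlow: "- (pi/2) \<le> h x" for x unfolding h_def
      by (rule cINF_greatest) (use arctan_bounded in \<open>auto intro: less_imp_le\<close>)
    have hup: "h x \<le> pi/2" for x using hle[of x 0] arctan_bounded[of "f 0 x"] by linarith
    have \<phi>i: "integrable M \<phi>"
    proof (rule integrable_const_bound[where B="pi"])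
      show "AE x in M. norm (\<phi> x) \<le> pi"
      proof (rule AE_I2)
        fix x
        show "norm (\<phi> x) \<le> pi" using hlow[of x] hup[of x] arctan_bounded[of "X x"]
          unfolding \<phi>_def by auto
      qed
    qed (rule \<phi>m)
    have Xa: "integrable M (\<lambda>x. arctan (X x))" using intg Xm by auto
    have fa: "integrable M (\<lambda>x. arctan (f n x))" for n using intg fmeas by auto
    have ma: "integrable M (\<lambda>x. min (arctan (X x)) (arctan (f n x)))" for n
      using Xa fa by auto
    have \<phi>bd: "integral\<^sup>L M \<phi> < inverse (real (Suc n))" for n
    proof -
      have "integral\<^sup>L M \<phi> \<le> integral\<^sup>L M (\<lambda>x. arctan (f n x) - min (arctan (X x)) (arctan (f n x)))"
      proof (rule integral_mono[OF \<phi>i])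
        show "integrable M (\<lambda>x. arctan (f n x) - min (arctan (X x)) (arctan (f n x)))"
          using fa ma by auto
        fix x show "\<phi> x \<le> arctan (f n x) - min (arctan (X x)) (arctan (f n x))"
          using hle[of x n] by (auto simp: \<phi>_def min_def)
      qed
      also have "\<dots> = E (f n) - integral\<^sup>L M (\<lambda>x. min (arctan (X x)) (arctan (f n x)))"
        unfolding E_def by (rule Bochner_Integration.integral_diff[OF fa ma])
      also have "\<dots> \<le> E (f n) - E (W n)"
      proof -
        have "E (W n) \<le> integral\<^sup>L M (\<lambda>x. min (arctan (X x)) (arctan (f n x)))"
          unfolding E_def
          by (rule integral_mono_AE) (use intg Smeas W[of n] ma in \<open>auto simp: arctan_le_iff elim!: AE_mp\<close>)
        then show ?thesis by simp
      qed
      also have "\<dots> < inverse (real (Suc n))" using Ef[of n] cle[of "W n"] W[of n] by simp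
      finally show ?thesis .
    qed
    have \<phi>le: "integral\<^sup>L M \<phi> \<le> 0"
    proof (rule ccontr)
      assume "\<not> ?thesis"
      then obtain n where "n > 0" "inverse (real n) < integral\<^sup>L M \<phi>"
        using ex_inverse_of_nat_less[of "integral\<^sup>L M \<phi>"] by auto
      moreover have "inverse (real (Suc n)) \<le> inverse (real n)" using \<open>n > 0\<close>
        by (simp add: le_imp_inverse_le)
      ultimately show False using \<phi>bd[of n] by linarith
    qed
    have "0 \<le> integral\<^sup>L M \<phi>" by (rule integral_nonneg_AE) (auto simp: \<phi>_def)
    then have "integral\<^sup>L M \<phi> = 0" using \<phi>le by linarith
    then have "AE x in M. \<phi> x = 0"
      using integral_nonneg_eq_0_iff_AE[OF \<phi>i] by (auto simp: \<phi>_def)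
    then show ?thesis
    proof (rule AE_mp, intro AE_I2 impI)
      fix x assume "\<phi> x = 0"
      then have hX: "h x \<le> arctan (X x)" by (auto simp: \<phi>_def)
      show "(INF m. ereal (f m x)) \<le> ereal (X x)"
      proof (rule ccontr)
        assume "\<not> ?thesis"
        then have "ereal (X x) < (INF m. ereal (f m x))" by simp
        then obtain t where t1: "ereal (X x) < ereal t" and t2: "ereal t < (INF m. ereal (f m x))"
          using ereal_dense2 by blast
        have "t < f m x" for m using less_INF_D[OF t2, of m] by simp
        then have "arctan t \<le> h x" unfolding h_def
          by (intro cINF_greatest) (auto simp: arctan_le_iff less_imp_le)
        moreover have "arctan (X x) < arctan t" using t1 by (simp add: arctan_less_iff)
        ultimately show False using hX by linarith
      qed
    qed
  qed
  show ?thesis by (rule that[OF _ fmono]) (use fin main in auto)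
qed

theorem lemma17:
  fixes M G :: "'a measure"
    and LF LG :: "('a \<Rightarrow> real) set"
    and \<pi> :: "('a \<Rightarrow> real) \<Rightarrow> ('a \<Rightarrow> real)"
    and Y \<xi>' :: "'a \<Rightarrow> real"
  assumes "prob_space M"
    and "subalgebra M G"
    and "L0_vector_lattice M M LF"
    and "L0_vector_lattice M G LG"
    and "\<forall>X\<in>LF. \<pi> X \<in> LG"
    and "\<forall>X\<in>LF. \<forall>X'\<in>LF. (AE x in M. X x = X' x) \<longrightarrow> (AE x in M. \<pi> X x = \<pi> X' x)"
    and "REG M G LF \<pi>"
    and "Y \<in> borel_measurable G"
    and "\<xi>' \<in> order_cont_dual M LF"
    and "AE x in M. 0 \<le> \<xi>' x"
  shows "down_directed M (acc_set M G LF \<pi> Y \<xi>') \<and>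
    (acc_set M G LF \<pi> Y \<xi>' \<noteq> {} \<longrightarrow>
      (\<exists>R \<eta>. is_ess_inf M G (acc_set M G LF \<pi> Y \<xi>') R \<and>
        (\<forall>m::nat. \<eta> m \<in> LF \<and>
           (AE x in density M (\<lambda>x. ennreal (\<xi>' x)).
              real_cond_exp M G (\<lambda>\<omega>. \<xi>' \<omega> * \<eta> m \<omega>) x \<ge> Y x)) \<and>
        (AE x in M. \<forall>m. \<pi> (\<eta> (Suc m)) x \<le> \<pi> (\<eta> m) x) \<and>
        (AE x in M. (\<lambda>m. ereal (\<pi> (\<eta> m) x)) \<longlonglongrightarrow> R x)))"
proof -
  interpret prob_space M by (rule assms(1))
  have sub: "subalgebra M G" by (rule assms(2))
  have "finite_measure_subalgebra M G"
    by (rule finite_measure_subalgebra.intro, unfold_locales, rule sub)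
  then interpret sigma_finite_subalgebra M G by (rule finite_measure_subalgebra_is_sigma_finite)
  have spG: "space G = space M" and setsG: "sets G \<subseteq> sets M" using sub by (auto simp: subalgebra_def)
  have GM: "h \<in> borel_measurable M" if "h \<in> borel_measurable G" for h :: "'a \<Rightarrow> real"
    using measurable_from_subalg[OF sub that] .
  have LFm: "LF \<subseteq> borel_measurable M" and LFadd: "\<forall>X\<in>LF. \<forall>Y\<in>LF. (\<lambda>x. X x + Y x) \<in> LF"
    and LFind: "\<forall>X\<in>LF. \<forall>A\<in>sets M. (\<lambda>x. indicator A x * X x) \<in> LF"
    using assms(3) unfolding L0_vector_lattice_def by auto
  have LGm: "LG \<subseteq> borel_measurable G" using assms(4) unfolding L0_vector_lattice_def by auto
  have piG: "\<pi> X \<in> borel_measurable G" if "X \<in> LF" for X using assms(5) LGm that by auto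
  have xint: "integrable M \<xi>'" and xprod: "\<forall>X\<in>LF. integrable M (\<lambda>x. \<xi>' x * X x)"
    using assms(9) unfolding order_cont_dual_def by auto
  have xm: "\<xi>' \<in> borel_measurable M" using xint by auto
  have xme: "(\<lambda>x. ennreal (\<xi>' x)) \<in> borel_measurable M"
    using measurable_compose[OF xm measurable_ennreal] by (simp add: comp_def)
  note dens = AE_density[OF xme]
  define S where "S = acc_set M G LF \<pi> Y \<xi>'"
  have Sm: "S \<subseteq> borel_measurable M"
  proof
    fix X assume "X \<in> S"
    then obtain \<xi> where "X = \<pi> \<xi>" "\<xi> \<in> LF" unfolding S_def acc_set_def by blast
    then show "X \<in> borel_measurable M" using GM[OF piG] by simp
  qed
  have dd: "down_directed M S"
    unfolding down_directed_def
  proof (intro ballI)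
    fix X1 X2 assume "X1 \<in> S" "X2 \<in> S"
    then obtain \<xi>1 \<xi>2 where X1: "X1 = \<pi> \<xi>1" "\<xi>1 \<in> LF"
      "AE x in density M (\<lambda>x. ennreal (\<xi>' x)). real_cond_exp M G (\<lambda>\<omega>. \<xi>' \<omega> * \<xi>1 \<omega>) x \<ge> Y x"
      and X2: "X2 = \<pi> \<xi>2" "\<xi>2 \<in> LF"
      "AE x in density M (\<lambda>x. ennreal (\<xi>' x)). real_cond_exp M G (\<lambda>\<omega>. \<xi>' \<omega> * \<xi>2 \<omega>) x \<ge> Y x"
      unfolding S_def acc_set_def by blast
    define A where "A = {x \<in> space G. \<pi> \<xi>1 x \<le> \<pi> \<xi>2 x}"
    have AG: "A \<in> sets G" unfolding A_def using borel_measurable_le[OF piG[OF X1(2)] piG[OF X2(2)]] .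
    define B where "B = space M - A"
    have BG: "B \<in> sets G" unfolding B_def using AG spG by (metis sets.compl_sets)
    have AM: "A \<in> sets M" and BM: "B \<in> sets M" using AG BG setsG by auto
    define \<xi> where "\<xi> = (\<lambda>\<omega>. \<xi>1 \<omega> * indicator A \<omega> + \<xi>2 \<omega> * indicator (space M - A) \<omega>)"
    have \<xi>eq: "\<xi> = (\<lambda>x. (\<lambda>x. indicator A x * \<xi>1 x) x + (\<lambda>x. indicator B x * \<xi>2 x) x)"
      unfolding \<xi>_def B_def by (auto simp: fun_eq_iff mult.commute)
    have a1: "(\<lambda>x. indicator A x * \<xi>1 x) \<in> LF" using LFind X1(2) AM by blast
    have a2: "(\<lambda>x. indicator B x * \<xi>2 x) \<in> LF" using LFind X2(2) BM by blast
    have \<xi>LF: "\<xi> \<in> LF" unfolding \<xi>eq using LFadd[rule_format, OF a1 a2] .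
    have "AE x in M. \<pi> \<xi> x = \<pi> \<xi>1 x * indicator A x + \<pi> \<xi>2 x * indicator (space M - A) x"
      proof -
      have "\<forall>X\<in>LF. \<forall>Y\<in>LF. \<forall>A\<in>sets G.
        AE x in M. \<pi> (\<lambda>\<omega>. X \<omega> * indicator A \<omega> + Y \<omega> * indicator (space M - A) \<omega>) x
                   = \<pi> X x * indicator A x + \<pi> Y x * indicator (space M - A) x"
        using assms(7) unfolding REG_def .
      from this[rule_format, OF X1(2) X2(2) AG] show ?thesis unfolding \<xi>_def .
    qed
    then have piineq: "AE x in M. \<pi> \<xi> x \<le> X1 x \<and> \<pi> \<xi> x \<le> X2 x"
    proof (rule AE_mp, intro AE_I2 impI)
      fix x assume "x \<in> space M"
        and e: "\<pi> \<xi> x = \<pi> \<xi>1 x * indicator A x + \<pi> \<xi>2 x * indicator (space M - A) x"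
      then show "\<pi> \<xi> x \<le> X1 x \<and> \<pi> \<xi> x \<le> X2 x"
        using spG unfolding X1(1) X2(1) A_def by (cases "x \<in> A") (auto simp: A_def)
    qed
    define g1 where "g1 = (\<lambda>x. \<xi>' x * \<xi>1 x)"
    define g2 where "g2 = (\<lambda>x. \<xi>' x * \<xi>2 x)"
    have g1i: "integrable M g1" and g2i: "integrable M g2"
      unfolding g1_def g2_def using xprod X1(2) X2(2) by auto
    have eqf: "(\<lambda>\<omega>. \<xi>' \<omega> * \<xi> \<omega>) = (\<lambda>x. indicator A x * g1 x + indicator B x * g2 x)"
      unfolding \<xi>eq g1_def g2_def by (auto simp: fun_eq_iff algebra_simps)
    have i1: "integrable M (\<lambda>x. indicator A x * g1 x)"
      using integrable_mult_indicator[OF AM g1i] by simp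
    have i2: "integrable M (\<lambda>x. indicator B x * g2 x)"
      using integrable_mult_indicator[OF BM g2i] by simp
    have c0: "AE x in M. real_cond_exp M G (\<lambda>x. indicator A x * g1 x + indicator B x * g2 x) x
       = real_cond_exp M G (\<lambda>x. indicator A x * g1 x) x + real_cond_exp M G (\<lambda>x. indicator B x * g2 x) x"
      by (rule real_cond_exp_add[OF i1 i2])
    have c1: "AE x in M. real_cond_exp M G (\<lambda>x. indicator A x * g1 x) x = indicator A x * real_cond_exp M G g1 x"
      by (rule real_cond_exp_mult[OF borel_measurable_indicator[OF AG] borel_measurable_integrable[OF g1i] i1])
    have c2: "AE x in M. real_cond_exp M G (\<lambda>x. indicator B x * g2 x) x = indicator B x * real_cond_exp M G g2 x"
      by (rule real_cond_exp_mult[OF borel_measurable_indicator[OF BG] borel_measurable_integrable[OF g2i] i2])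
    have d1: "AE x in M. 0 < ennreal (\<xi>' x) \<longrightarrow> real_cond_exp M G g1 x \<ge> Y x"
      using X1(3) dens unfolding g1_def by simp
    have d2: "AE x in M. 0 < ennreal (\<xi>' x) \<longrightarrow> real_cond_exp M G g2 x \<ge> Y x"
      using X2(3) dens unfolding g2_def by simp
    have "AE x in M. 0 < ennreal (\<xi>' x) \<longrightarrow> real_cond_exp M G (\<lambda>\<omega>. \<xi>' \<omega> * \<xi> \<omega>) x \<ge> Y x"
      using c0 c1 c2 d1 d2 AE_space
    proof (eventually_elim)
      case (elim x)
      then show ?case unfolding eqf B_def by (cases "x \<in> A") auto
    qed
    then have "AE x in density M (\<lambda>x. ennreal (\<xi>' x)). real_cond_exp M G (\<lambda>\<omega>. \<xi>' \<omega> * \<xi> \<omega>) x \<ge> Y x"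
      using dens by simp
    then have "\<pi> \<xi> \<in> S" unfolding S_def acc_set_def using \<xi>LF by blast
    then show "\<exists>X3\<in>S. AE x in M. X3 x \<le> X1 x \<and> X3 x \<le> X2 x" using piineq by blast
  qed
  have part2: "\<exists>R \<eta>. is_ess_inf M G S R \<and>
        (\<forall>m::nat. \<eta> m \<in> LF \<and>
           (AE x in density M (\<lambda>x. ennreal (\<xi>' x)).
              real_cond_exp M G (\<lambda>\<omega>. \<xi>' \<omega> * \<eta> m \<omega>) x \<ge> Y x)) \<and>
        (AE x in M. \<forall>m. \<pi> (\<eta> (Suc m)) x \<le> \<pi> (\<eta> m) x) \<and>
        (AE x in M. (\<lambda>m. ereal (\<pi> (\<eta> m) x)) \<longlonglongrightarrow> R x)" if ne: "S \<noteq> {}"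
  proof -
    obtain f where fS: "\<forall>m. f m \<in> S" and fmono: "AE x in M. \<forall>m. f (Suc m) x \<le> f m x"
      and flow: "\<forall>X\<in>S. AE x in M. (INF m. ereal (f m x)) \<le> ereal (X x)"
      using ess_inf_seq[OF assms(1) Sm ne dd] by blast
    have "\<forall>m. \<exists>\<xi>. f m = \<pi> \<xi> \<and> \<xi> \<in> LF \<and>
           (AE x in density M (\<lambda>x. ennreal (\<xi>' x)).
              real_cond_exp M G (\<lambda>\<omega>. \<xi>' \<omega> * \<xi> \<omega>) x \<ge> Y x)"
      using fS unfolding S_def acc_set_def by blast
    then obtain \<eta> where \<eta>: "\<And>m. f m = \<pi> (\<eta> m) \<and> \<eta> m \<in> LF \<and>
           (AE x in density M (\<lambda>x. ennreal (\<xi>' x)).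
              real_cond_exp M G (\<lambda>\<omega>. \<xi>' \<omega> * \<eta> m \<omega>) x \<ge> Y x)"
      by metis
    have fG: "f m \<in> borel_measurable G" for m using \<eta>[of m] piG by simp
    define R where "R x = (INF m. ereal (f m x))" for x
    have RG: "R \<in> borel_measurable G" unfolding R_def
      by (rule borel_measurable_INF) (use fG in auto)
    have ess: "is_ess_inf M G S R" unfolding is_ess_inf_def
    proof (intro conjI ballI impI RG)
      fix X assume "X \<in> S" then show "AE x in M. R x \<le> ereal (X x)" using flow R_def by simp
    next
      fix R' :: "'a \<Rightarrow> ereal" assume "R' \<in> borel_measurable G"
        and h: "\<forall>X\<in>S. AE x in M. R' x \<le> ereal (X x)"
      then have "AE x in M. \<forall>m. R' x \<le> ereal (f m x)" unfolding AE_all_countable using fS by auto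
      then show "AE x in M. R' x \<le> R x"
        by (rule AE_mp) (auto simp: R_def intro: INF_greatest)
    qed
    have "AE x in M. \<forall>m. \<pi> (\<eta> (Suc m)) x \<le> \<pi> (\<eta> m) x"
      using fmono \<eta> by simp
    moreover have "AE x in M. (\<lambda>m. ereal (\<pi> (\<eta> m) x)) \<longlonglongrightarrow> R x"
      using fmono
    proof (rule AE_mp, intro AE_I2 impI)
      fix x assume "\<forall>m. f (Suc m) x \<le> f m x"
      then have "decseq (\<lambda>m. ereal (f m x))" by (intro decseq_SucI) simp
      then have "(\<lambda>m. ereal (f m x)) \<longlonglongrightarrow> R x" unfolding R_def by (rule LIMSEQ_INF)
      then show "(\<lambda>m. ereal (\<pi> (\<eta> m) x)) \<longlonglongrightarrow> R x" using \<eta> by simp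
    qed
    ultimately show ?thesis using ess \<eta> by blast
  qed
  show ?thesis using dd part2 unfolding S_def by blast
qed
end
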